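(* Let $\Gamma$ be a cocompact, discrete, torsion-free subgroup of $\mathrm{Isom}_+(\mathbb{H}^3)$ and let $\lambda>0$. Suppose that the family $\mathcal{Z}_\lambda(\Gamma)$ covers $\mathbb{H}^3$. Then the nerve $K_{\mathcal{Z}_\lambda(\Gamma)}$ is finite-dimensional.
   Context: For such $\Gamma$, every nontrivial element is loxodromic and lies in a unique maximal cyclic subgroup. Let $\mathcal{C}_\lambda(\Gamma)$ be the set of maximal cyclic subgroups $C$ of $\Gamma$ whose generator has translation length $<\lambda$. For $1\neq\gamma\in\Gamma$ let $Z_\lambda(\gamma)=\{\tilde P\in\mathbb{H}^3: d(\tilde P,\gamma\cdot\tilde P)<\lambda\}$, and for a maximal cyclic subgroup $C$ let $Z_\lambda(C)=\bigcup_{1\ne\gamma\in C}Z_\lambda(\gamma)$. Set $\mathcal{Z}_\lambda(\Gamma)=(Z_\lambda(C))_{C\in\mathcal{C}_\lambda(\Gamma)}$, an indexed family of open subsets of $\mathbb{H}^3$. For an indexed open covering $\mathcal{F}=(U_i)_{i\in I}$ of a space, the nerve $K_{\mathcal F}$ is the geometric realization of the abstract simplicial complex whose vertex set is $\{v_i: i\in I\}$ (a bijective copy of $I$) and whose simplices are the finite nonempty sets $\{v_{i_0},\dots,v_{i_d}\}$ with $U_{i_0}\cap\dots\cap U_{i_d}\neq\emptyset$ (distinct indices give distinct vertices even if the sets coincide). *)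

theory Defs
  imports "HOL-Analysis.Analysis"
begin

text \<open>Hyperboloid model of hyperbolic 3-space inside R^4 (coordinate 0 is the time coordinate).\<close>

definition mink :: "real^4 \<Rightarrow> real^4 \<Rightarrow> real" where
  "mink x y = - (x$0 * y$0) + x$1 * y$1 + x$2 * y$2 + x$3 * y$3"

definition H3 :: "(real^4) set" where
  "H3 = {x. mink x x = -1 \<and> x$0 > 0}"

definition hdist :: "real^4 \<Rightarrow> real^4 \<Rightarrow> real" where
  "hdist x y = arcosh (- mink x y)"

text \<open>Isom_+(H^3) = SO^+(3,1): Lorentz matrices preserving the upper sheet, of determinant 1.\<close>

definition Isom_plus :: "(real^4^4) set" where
  "Isom_plus = {A. (\<forall>x y. mink (A *v x) (A *v y) = mink x y) \<and> (\<lambda>x. A *v x) ` H3 \<subseteq> H3 \<and> det A = 1}"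

definition act :: "real^4^4 \<Rightarrow> real^4 \<Rightarrow> real^4" where
  "act A x = A *v x"

definition is_subgroup :: "(real^4^4) set \<Rightarrow> bool" where
  "is_subgroup G \<longleftrightarrow> G \<subseteq> Isom_plus \<and> mat 1 \<in> G \<and>
     (\<forall>a\<in>G. \<forall>b\<in>G. a ** b \<in> G) \<and> (\<forall>a\<in>G. matrix_inv a \<in> G)"

definition discrete_group :: "(real^4^4) set \<Rightarrow> bool" where
  "discrete_group G \<longleftrightarrow> (\<forall>g\<in>G. \<exists>e>0. \<forall>h\<in>G. dist h g < e \<longrightarrow> h = g)"

definition cocompact :: "(real^4^4) set \<Rightarrow> bool" where
  "cocompact G \<longleftrightarrow> (\<exists>K. compact K \<and> K \<subseteq> H3 \<and> (\<Union>g\<in>G. act g ` K) = H3)"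

definition mpow :: "real^4^4 \<Rightarrow> nat \<Rightarrow> real^4^4" where
  "mpow A n = ((\<lambda>B. A ** B) ^^ n) (mat 1)"

definition torsion_free :: "(real^4^4) set \<Rightarrow> bool" where
  "torsion_free G \<longleftrightarrow> (\<forall>g\<in>G. g \<noteq> mat 1 \<longrightarrow> (\<forall>n\<ge>1. mpow g n \<noteq> mat 1))"

definition zpow :: "real^4^4 \<Rightarrow> int \<Rightarrow> real^4^4" where
  "zpow A k = (if k \<ge> 0 then mpow A (nat k) else mpow (matrix_inv A) (nat (- k)))"

definition cyc :: "real^4^4 \<Rightarrow> (real^4^4) set" where
  "cyc g = range (zpow g)"

definition cyclic_subgroup_of :: "(real^4^4) set \<Rightarrow> (real^4^4) set \<Rightarrow> bool" where
  "cyclic_subgroup_of G C \<longleftrightarrow> (\<exists>g\<in>G. C = cyc g)"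

definition maximal_cyclic_subgroup :: "(real^4^4) set \<Rightarrow> (real^4^4) set \<Rightarrow> bool" where
  "maximal_cyclic_subgroup G C \<longleftrightarrow> cyclic_subgroup_of G C \<and>
     (\<forall>D. cyclic_subgroup_of G D \<and> C \<subseteq> D \<longrightarrow> D = C)"

definition transl_length :: "real^4^4 \<Rightarrow> real" where
  "transl_length g = Inf {hdist x (act g x) | x. x \<in> H3}"

definition short_cyclics :: "(real^4^4) set \<Rightarrow> real \<Rightarrow> (real^4^4) set set" where
  "short_cyclics G lam = {C. maximal_cyclic_subgroup G C \<and>
       (\<exists>g. C = cyc g \<and> transl_length g < lam)}"

definition Zel :: "real \<Rightarrow> real^4^4 \<Rightarrow> (real^4) set" where
  "Zel lam g = {x \<in> H3. hdist x (act g x) < lam}"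

definition Zcyc :: "real \<Rightarrow> (real^4^4) set \<Rightarrow> (real^4) set" where
  "Zcyc lam C = (\<Union>g\<in>C - {mat 1}. Zel lam g)"

definition nerve :: "('i \<Rightarrow> 'a set) \<Rightarrow> 'i set \<Rightarrow> 'i set set" where
  "nerve U I = {S. S \<subseteq> I \<and> finite S \<and> S \<noteq> {} \<and> (\<Inter>i\<in>S. U i) \<noteq> {}}"

text \<open>A simplicial complex (hence its geometric realization) is finite-dimensional iff the
  dimensions card S - 1 of its simplices are bounded.\<close>
definition finite_dimensional :: "'i set set \<Rightarrow> bool" where
  "finite_dimensional K \<longleftrightarrow> (\<exists>d::nat. \<forall>S\<in>K. card S \<le> d + 1)"

end

theory Submission
  imports Defs
begin


definition sp :: "real^4 \<Rightarrow> real^4 \<Rightarrow> real" where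
  "sp x y = x$1*y$1 + x$2*y$2 + x$3*y$3"

lemma mink_sp: "mink x y = -(x$0*y$0) + sp x y"
  by (simp add: mink_def sp_def)

lemma sp_sym: "sp x y = sp y x" by (simp add: sp_def mult.commute)

lemma cs3: "(sp x y)^2 \<le> sp x x * sp y y"
proof -
  have "sp x x * sp y y - (sp x y)^2 = (x$1*y$2 - x$2*y$1)^2 + (x$1*y$3 - x$3*y$1)^2 + (x$2*y$3 - x$3*y$2)^2"
    by (simp add: sp_def power2_eq_square algebra_simps)
  moreover have "(x$1*y$2 - x$2*y$1)^2 + (x$1*y$3 - x$3*y$1)^2 + (x$2*y$3 - x$3*y$2)^2 \<ge> 0" by simp
  ultimately show ?thesis by linarith
qed

lemma sp_nonneg: "sp x x \<ge> 0" by (simp add: sp_def)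

lemma abs_sp: "\<bar>sp x y\<bar> \<le> sqrt (sp x x) * sqrt (sp y y)"
proof -
  have "\<bar>sp x y\<bar> = sqrt ((sp x y)^2)" by simp
  also have "\<dots> \<le> sqrt (sp x x * sp y y)" using cs3 real_sqrt_le_mono by blast
  also have "\<dots> = sqrt (sp x x) * sqrt (sp y y)" by (simp add: real_sqrt_mult)
  finally show ?thesis .
qed

lemma H3_sp: "x \<in> H3 \<Longrightarrow> sp x x = (x$0)^2 - 1"
  by (simp add: H3_def mink_sp power2_eq_square)

lemma H3_pos: "x \<in> H3 \<Longrightarrow> x$0 > 0" by (simp add: H3_def)

lemma H3_ge1: "x \<in> H3 \<Longrightarrow> x$0 \<ge> 1"
proof -
  assume x: "x \<in> H3"
  then have "(x$0)^2 \<ge> 1" using H3_sp sp_nonneg by (metis diff_ge_0_iff_ge)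
  show ?thesis
  proof (rule ccontr)
    assume "\<not> x$0 \<ge> 1"
    then have "x$0 * x$0 < 1 * 1" using H3_pos[OF x] by (intro mult_strict_mono) auto
    then show False using \<open>(x$0)^2 \<ge> 1\<close> by (simp add: power2_eq_square)
  qed
qed

lemma mink_ge1: assumes "u \<in> H3" "w \<in> H3" shows "- mink u w \<ge> 1"
proof -
  let ?a = "u$0" and ?b = "w$0"
  have a: "?a \<ge> 1" and b: "?b \<ge> 1" using assms H3_ge1 by auto
  have "\<bar>sp u w\<bar> \<le> sqrt ((?a^2 - 1) * (?b^2 - 1))"
    using abs_sp[of u w] assms by (simp add: H3_sp real_sqrt_mult)
  also have "\<dots> \<le> ?a * ?b - 1"
  proof (rule real_le_lsqrt)
    have "1 * 1 \<le> ?a * ?b" using a b by (intro mult_mono) auto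
    then show "0 \<le> ?a * ?b - 1" by simp
    have "(?a - ?b)^2 \<ge> 0" by simp
    then show "(?a^2 - 1) * (?b^2 - 1) \<le> (?a * ?b - 1)^2" by (simp add: power2_eq_square algebra_simps)
  qed
  finally show ?thesis by (simp add: mink_sp)
qed

lemma mink_lb:
  assumes u: "u \<in> H3" and w: "mink w w \<le> 0" "w$0 > 0"
  shows "- mink u w \<ge> w$0 / (2 * u$0)"
proof -
  define a where "a = u$0"
  define b where "b = w$0"
  have a: "a \<ge> 1" using u H3_ge1 a_def by auto
  have b: "b > 0" using w b_def by auto
  define s where "s = sqrt (a^2 - 1)"
  have s0: "s \<ge> 0" using a by (simp add: s_def)
  have s2: "s^2 = a^2 - 1" using a by (simp add: s_def)
  have spw: "sp w w \<le> b^2" using w(1) unfolding b_def by (simp add: mink_sp power2_eq_square)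
  have sw: "sqrt (sp w w) \<le> b"
    using spw b by (intro real_le_lsqrt) auto
  have spu: "sqrt (sp u u) = s" using u by (simp add: H3_sp s_def a_def)
  have "\<bar>sp u w\<bar> \<le> s * sqrt (sp w w)"
    using abs_sp[of u w] spu by simp
  also have "\<dots> \<le> s * b" using sw s0 by (rule mult_left_mono)
  finally have abs1: "\<bar>sp u w\<bar> \<le> s * b" .
  have mk: "- mink u w = a * b - sp u w" by (simp add: mink_sp a_def b_def)
  have 1: "- mink u w \<ge> a * b - s * b" using abs1 mk by linarith
  have "(a - s) * (a + s) = a^2 - s^2" by (simp add: power2_eq_square algebra_simps)
  then have prod: "(a - s) * (a + s) = 1" using s2 by linarith
  have "s^2 \<le> a^2" using s2 by linarith
  then have sa: "s \<le> a" using a power2_le_imp_le[of s a] by linarith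
  then have le: "a + s \<le> 2 * a" by linarith
  have "(a - s) * (a + s) \<le> (a - s) * (2 * a)"
    using mult_left_mono[OF le, of "a - s"] sa by linarith
  then have ge: "1 \<le> (a - s) * (2 * a)" using prod by linarith
  have a2: "0 < 2 * a" using a by linarith
  have "1 / (2 * a) \<le> a - s" using ge a2 by (simp only: divide_le_eq) simp
  then have "(1 / (2 * a)) * b \<le> (a - s) * b" using b mult_right_mono[of "1/(2*a)" "a - s" b] by linarith
  then have "a * b - s * b \<ge> b / (2 * a)" by (simp add: algebra_simps)
  then show ?thesis using 1 unfolding a_def b_def by linarith
qed



lemma four_is_0: "(4::4) = 0" by simp

lemma exhaust4: fixes i :: 4 shows "i = 0 \<or> i = 1 \<or> i = 2 \<or> i = 3"
  using exhaust_4[of i] four_is_0 by auto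

lemma mink_sym: "mink x y = mink y x" by (simp add: mink_def mult.commute)
lemma mink_add_left: "mink (x + y) z = mink x z + mink y z" by (simp add: mink_def algebra_simps)
lemma mink_add_right: "mink z (x + y) = mink z x + mink z y" by (simp add: mink_def algebra_simps)
lemma mink_diff_left: "mink (x - y) z = mink x z - mink y z" by (simp add: mink_def algebra_simps)
lemma mink_diff_right: "mink z (x - y) = mink z x - mink z y" by (simp add: mink_def algebra_simps)
lemma mink_scale_left: "mink (c *\<^sub>R x) z = c * mink x z" by (simp add: mink_def algebra_simps)
lemma mink_scale_right: "mink z (c *\<^sub>R x) = c * mink z x" by (simp add: mink_def algebra_simps)
lemma mink_zero_left[simp]: "mink 0 z = 0" by (simp add: mink_def)
lemma mink_zero_right[simp]: "mink z 0 = 0" by (simp add: mink_def)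

lemmas mink_lin = mink_add_left mink_add_right mink_diff_left mink_diff_right mink_scale_left mink_scale_right

lemma mink_axis0: "mink (axis 0 1) w = - w$0"
  by (simp add: mink_def axis_def)
lemma mink_axis1: "mink (axis 1 1) w = w$1"
  by (simp add: mink_def axis_def)
lemma mink_axis2: "mink (axis 2 1) w = w$2"
  by (simp add: mink_def axis_def)
lemma mink_axis3: "mink (axis 3 1) w = w$3"
  by (simp add: mink_def axis_def)

lemma mink_nondeg: assumes "\<And>v. mink v w = 0" shows "w = 0"
proof -
  have "w$i = 0" for i
    using exhaust4[of i] assms[of "axis 0 1"] assms[of "axis 1 1"] assms[of "axis 2 1"] assms[of "axis 3 1"]
    by (auto simp: mink_axis0 mink_axis1 mink_axis2 mink_axis3)
  then show ?thesis by (simp add: vec_eq_iff)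
qed

definition e0 :: "real^4" where "e0 = axis 0 1"

lemma e0_H3: "e0 \<in> H3" by (simp add: e0_def H3_def mink_def axis_def)

lemma col_entry: "((A::real^4^4) *v axis j 1) $ i = A $ i $ j"
  by (simp add: matrix_vector_mult_basis column_def)

lemma isom_lor: "A \<in> Isom_plus \<Longrightarrow> mink (A *v x) (A *v y) = mink x y"
  by (simp add: Isom_plus_def)

lemma isom_H3: "A \<in> Isom_plus \<Longrightarrow> x \<in> H3 \<Longrightarrow> A *v x \<in> H3"
  by (auto simp: Isom_plus_def)

lemma isom_inv: assumes "A \<in> Isom_plus"
  shows "A ** matrix_inv A = mat 1" "matrix_inv A ** A = mat 1"
proof -
  have "det A \<noteq> 0" using assms by (simp add: Isom_plus_def)
  then have "invertible A" by (simp add: invertible_det_nz)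
  then have "\<exists>A'. A ** A' = mat 1 \<and> A' ** A = mat 1" by (simp add: invertible_def)
  then have "A ** matrix_inv A = mat 1 \<and> matrix_inv A ** A = mat 1"
    unfolding matrix_inv_def by (rule someI_ex)
  then show "A ** matrix_inv A = mat 1" "matrix_inv A ** A = mat 1" by auto
qed

lemma isom_inv_vec: assumes "A \<in> Isom_plus"
  shows "A *v (matrix_inv A *v x) = x" "matrix_inv A *v (A *v x) = x"
  using isom_inv[OF assms] by (simp_all add: matrix_vector_mul_assoc)

lemma sq_le_sp: "i = 1 \<or> i = 2 \<or> i = 3 \<Longrightarrow> (x$i)^2 \<le> sp x x"
proof -
  have "0 \<le> x$1*x$1" "0 \<le> x$2*x$2" "0 \<le> x$3*x$3" by simp_all
  then show "i = 1 \<or> i = 2 \<or> i = 3 \<Longrightarrow> (x$i)^2 \<le> sp x x" by (auto simp: sp_def power2_eq_square)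
qed

lemma abs_le_of_sq_le: "(t::real)^2 \<le> c^2 \<Longrightarrow> c \<ge> 0 \<Longrightarrow> \<bar>t\<bar> \<le> c"
  using abs_le_square_iff by (metis abs_of_nonneg)

lemma entry_bound:
  assumes A: "A \<in> Isom_plus"
  shows "\<bar>A$i$j\<bar> \<le> A$0$0"
proof -
  define c where "c = (\<lambda>j. A *v axis j 1)"
  have ce: "c j $ i = A$i$j" for i j by (simp add: c_def col_entry)
  have cm: "mink (c j) (c k) = mink (axis j 1) (axis k 1)" for j k
    using isom_lor[OF A] by (simp add: c_def)
  have c0: "c 0 \<in> H3" using isom_H3[OF A e0_H3] by (simp add: c_def e0_def)
  have a0: "A$0$0 > 0" using H3_pos[OF c0] by (simp add: ce)
  have sp0: "sp (c 0) (c 0) = (A$0$0)^2 - 1" using H3_sp[OF c0] by (simp add: ce)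
  have col0: "\<bar>A$i$0\<bar> \<le> A$0$0" for i
  proof -
    consider "i = 0" | "i = 1 \<or> i = 2 \<or> i = 3" using exhaust4[of i] by auto
    then show ?thesis
    proof cases
      case 1 then show ?thesis using a0 by simp
    next
      case 2
      have "(A$i$0)^2 \<le> (A$0$0)^2" using sq_le_sp[OF 2, of "c 0"] sp0 by (simp add: ce)
      then show ?thesis using abs_le_of_sq_le a0 by auto
    qed
  qed
  have colj: "\<bar>A$i$j\<bar> \<le> A$0$0" if j: "j = 1 \<or> j = 2 \<or> j = 3" for i j
  proof -
    have mjj: "mink (c j) (c j) = 1" using cm[of j j] j by (auto simp: mink_def axis_def)
    have m0j: "mink (c 0) (c j) = 0" using cm[of 0 j] j by (auto simp: mink_def axis_def)
    define t where "t = A$0$j"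
    define a where "a = A$0$0"
    have spj: "sp (c j) (c j) = 1 + t^2" using mjj by (simp add: mink_sp ce t_def power2_eq_square)
    have sp0j: "sp (c 0) (c j) = a * t" using m0j by (simp add: mink_sp ce t_def a_def)
    have "(a * t)^2 \<le> ((A$0$0)^2 - 1) * (1 + t^2)" using cs3[of "c 0" "c j"] sp0 spj sp0j by simp
    then have "a^2 * t^2 \<le> (a^2 - 1) * (1 + t^2)" by (simp add: a_def power_mult_distrib)
    then have "t^2 \<le> a^2 - 1" by (simp add: algebra_simps)
    then have tb: "t^2 \<le> a^2" by linarith
    have row0: "\<bar>t\<bar> \<le> a" using abs_le_of_sq_le[OF tb] a0 a_def by simp
    consider "i = 0" | "i = 1 \<or> i = 2 \<or> i = 3" using exhaust4[of i] by auto
    then show ?thesis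
    proof cases
      case 1 then show ?thesis using row0 by (simp add: t_def a_def)
    next
      case 2
      have "(A$i$j)^2 \<le> 1 + t^2" using sq_le_sp[OF 2, of "c j"] spj by (simp add: ce)
      also have "\<dots> \<le> a^2" using \<open>t^2 \<le> a^2 - 1\<close> by linarith
      finally show ?thesis using abs_le_of_sq_le a0 a_def by auto
    qed
  qed
  show ?thesis using exhaust4[of j] col0 colj by auto
qed



lemma A00_bound:
  assumes A: "A \<in> Isom_plus" and k: "k \<in> H3"
  shows "A$0$0 \<le> 2 * k$0 * (A *v k)$0"
proof -
  define y where "y = A *v k"
  have y: "y \<in> H3" using isom_H3[OF A k] by (simp add: y_def)
  define c where "c = A *v e0"
  have c: "c \<in> H3" using isom_H3[OF A e0_H3] by (simp add: c_def)
  have c0: "c$0 = A$0$0" by (simp add: c_def e0_def col_entry)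
  have "mink y c = mink k e0" using isom_lor[OF A] by (simp add: y_def c_def)
  also have "\<dots> = - k$0" by (simp add: mink_sym[of k] e0_def mink_axis0)
  finally have m: "mink y c = - k$0" .
  have "- mink y c \<ge> c$0 / (2 * y$0)"
    using mink_lb[OF y, of c] c by (simp add: H3_def)
  then have "k$0 \<ge> A$0$0 / (2 * y$0)" using m c0 by simp
  moreover have "y$0 > 0" using y H3_pos by auto
  ultimately show ?thesis by (simp add: y_def divide_le_eq mult.commute mult.left_commute)
qed

lemma inv00: assumes A: "A \<in> Isom_plus" shows "(matrix_inv A)$0$0 = A$0$0"
proof -
  have "mink e0 (matrix_inv A *v e0) = mink (A *v e0) (A *v (matrix_inv A *v e0))"
    using isom_lor[OF A] by simp
  also have "\<dots> = mink (A *v e0) e0" using isom_inv_vec[OF A] by simp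
  finally have "mink e0 (matrix_inv A *v e0) = mink e0 (A *v e0)" by (simp add: mink_sym)
  then show ?thesis by (simp add: e0_def mink_axis0 col_entry)
qed

lemma mat_norm_le:
  fixes A :: "real^4^4"
  assumes "\<And>i j. \<bar>A$i$j\<bar> \<le> c"
  shows "norm A \<le> 16 * c"
proof -
  have "norm A \<le> (\<Sum>i\<in>UNIV. norm (A$i))" by (simp add: norm_vec_def L2_set_le_sum)
  also have "\<dots> \<le> (\<Sum>i\<in>(UNIV::4 set). 4 * c)"
  proof (rule sum_mono)
    fix i
    have "norm (A$i) \<le> (\<Sum>j\<in>UNIV. \<bar>A$i$j\<bar>)" by (rule norm_le_l1_cart)
    also have "\<dots> \<le> (\<Sum>j\<in>(UNIV::4 set). c)" using assms by (intro sum_mono) auto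
    also have "\<dots> = 4 * c" by simp
    finally show "norm (A$i) \<le> 4 * c" .
  qed
  also have "\<dots> = 16 * c" by simp
  finally show ?thesis .
qed

lemma matrix_diff_ldistrib: "(A::real^4^4) ** (B - C) = A ** B - A ** C"
proof -
  have "A ** B = A ** ((B - C) + C)" by simp
  also have "\<dots> = A ** (B - C) + A ** C" by (rule matrix_add_ldistrib)
  finally show ?thesis by simp
qed

lemma subgroup_isom: "is_subgroup G \<Longrightarrow> g \<in> G \<Longrightarrow> g \<in> Isom_plus"
  by (auto simp: is_subgroup_def)
lemma subgroup_mul: "is_subgroup G \<Longrightarrow> g \<in> G \<Longrightarrow> h \<in> G \<Longrightarrow> g ** h \<in> G"
  by (auto simp: is_subgroup_def)
lemma subgroup_inv: "is_subgroup G \<Longrightarrow> g \<in> G \<Longrightarrow> matrix_inv g \<in> G"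
  by (auto simp: is_subgroup_def)
lemma subgroup_one: "is_subgroup G \<Longrightarrow> mat 1 \<in> G"
  by (auto simp: is_subgroup_def)

lemma infinite_two:
  assumes "infinite S" obtains g h where "g \<in> S" "h \<in> S" "g \<noteq> h"
proof -
  obtain g where g: "g \<in> S" using assms infinite_imp_nonempty by blast
  have "infinite (S - {g})" using assms by simp
  then obtain h where "h \<in> S - {g}" using infinite_imp_nonempty by blast
  then show ?thesis using that g by blast
qed

lemma finite_bounded_subgroup:
  assumes G: "is_subgroup G" and D: "discrete_group G"
    and S: "S \<subseteq> G" and B: "\<And>A. A \<in> S \<Longrightarrow> A$0$0 \<le> M"
  shows "finite S"
proof (rule ccontr)
  assume inf: "infinite S"
  have M0: "M \<ge> 0"
  proof -
    obtain A where "A \<in> S" using inf infinite_imp_nonempty by blast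
    then show ?thesis using B[of A] entry_bound[of A 0 0] subgroup_isom[OF G] S by fastforce
  qed
  have ent: "\<bar>A$i$j\<bar> \<le> M" if "A \<in> S" for A i j
    using entry_bound[of A i j] B[OF that] subgroup_isom[OF G] S that by fastforce
  have "S \<subseteq> cball 0 (16 * M)"
    using mat_norm_le[of _ M] ent by (auto simp: dist_norm)
  then have "bounded S" using bounded_cball bounded_subset by blast
  then obtain a where a: "a islimpt S" using bounded_infinite_imp_islimpt[of S S] inf by blast
  obtain e where e: "e > 0" "\<And>h. h \<in> G \<Longrightarrow> dist h (mat 1) < e \<Longrightarrow> h = mat 1"
    using D subgroup_one[OF G] unfolding discrete_group_def by blast
  define r where "r = e / (64 * (M + 1))"
  have r: "r > 0" using e M0 by (simp add: r_def)
  have "infinite (S \<inter> ball a (r/2))" using a r by (simp add: islimpt_eq_infinite_ball)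
  then obtain g h where gh: "g \<in> S \<inter> ball a (r/2)" "h \<in> S \<inter> ball a (r/2)" "g \<noteq> h"
    by (rule infinite_two)
  have dgh: "dist g h < r"
    using gh(1,2) dist_triangle_half_l[of g a r h] by (auto simp: dist_commute)
  have gG: "g \<in> G" and hG: "h \<in> G" using gh S by auto
  have hI: "h \<in> Isom_plus" using subgroup_isom[OF G hG] .
  define x where "x = matrix_inv h ** g"
  have xG: "x \<in> G" using subgroup_mul[OF G subgroup_inv[OF G hG] gG] by (simp add: x_def)
  have x1: "x \<noteq> mat 1"
  proof
    assume "x = mat 1"
    then have "h ** x = h" by simp
    moreover have "h ** x = g" using isom_inv(1)[OF hI] by (simp add: x_def matrix_mul_assoc)
    ultimately show False using gh(3) by simp
  qed
  define Dm where "Dm = g - h"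
  have xm: "x - mat 1 = matrix_inv h ** Dm"
    using isom_inv(2)[OF hI] by (simp add: x_def Dm_def matrix_diff_ldistrib)
  have Dent: "\<bar>Dm$k$j\<bar> \<le> r" for k j
  proof -
    have "\<bar>Dm$k$j\<bar> \<le> norm (Dm$k)" by (rule component_le_norm_cart)
    also have "\<dots> \<le> norm Dm" by (rule Finite_Cartesian_Product.norm_nth_le)
    also have "\<dots> < r" using dgh by (simp add: Dm_def dist_norm)
    finally show ?thesis by simp
  qed
  have hinv: "\<bar>matrix_inv h $i$k\<bar> \<le> M" for i k
  proof -
    have "matrix_inv h \<in> Isom_plus" using subgroup_isom[OF G subgroup_inv[OF G hG]] .
    then have "\<bar>matrix_inv h $i$k\<bar> \<le> (matrix_inv h)$0$0" by (rule entry_bound)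
    also have "\<dots> = h$0$0" by (rule inv00[OF hI])
    also have "\<dots> \<le> M" using B gh by auto
    finally show ?thesis .
  qed
  have pent: "\<bar>(matrix_inv h ** Dm)$i$j\<bar> \<le> 4 * (M * r)" for i j
  proof -
    have "\<bar>(matrix_inv h ** Dm)$i$j\<bar> = \<bar>\<Sum>k\<in>UNIV. matrix_inv h $i$k * Dm$k$j\<bar>"
      by (simp add: matrix_matrix_mult_def)
    also have "\<dots> \<le> (\<Sum>k\<in>UNIV. \<bar>matrix_inv h $i$k * Dm$k$j\<bar>)" by (rule sum_abs)
    also have "\<dots> \<le> (\<Sum>k\<in>(UNIV::4 set). M * r)"
    proof (rule sum_mono)
      fix k
      show "\<bar>matrix_inv h $i$k * Dm$k$j\<bar> \<le> M * r"
        unfolding abs_mult using hinv[of i k] Dent[of k j] M0 by (intro mult_mono) auto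
    qed
    also have "\<dots> = 4 * (M * r)" by simp
    finally show ?thesis .
  qed
  have "norm (x - mat 1) \<le> 16 * (4 * (M * r))" unfolding xm by (rule mat_norm_le[OF pent])
  also have "\<dots> = 64 * M * r" by simp
  also have "\<dots> < e"
  proof -
    have "64 * M * r = e * (M / (M + 1))" using M0 by (simp add: r_def field_simps)
    also have "\<dots> < e * 1" using M0 e by (intro mult_strict_left_mono) auto
    finally show ?thesis by simp
  qed
  finally have "dist x (mat 1) < e" by (simp add: dist_norm)
  then show False using e(2)[OF xG] x1 by simp
qed



lemma mpow_0[simp]: "mpow A 0 = mat 1" by (simp add: mpow_def)
lemma mpow_Suc: "mpow A (Suc n) = A ** mpow A n" by (simp add: mpow_def)

lemma mpow_add: "mpow A (m + n) = mpow A m ** mpow A n"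
  by (induction m) (simp_all add: mpow_Suc matrix_mul_assoc)

lemma mpow_Suc': "mpow A (Suc n) = mpow A n ** A"
  using mpow_add[of A n 1] by (simp add: mpow_Suc)

lemma mpow_G: "is_subgroup G \<Longrightarrow> g \<in> G \<Longrightarrow> mpow g n \<in> G"
  by (induction n) (simp_all add: mpow_Suc subgroup_one subgroup_mul)

lemma mpow_comm: "A ** mpow A n = mpow A n ** A"
  by (metis mpow_Suc mpow_Suc')

lemma mpow_comm_gen: "A ** B = B ** A \<Longrightarrow> mpow A n ** B = B ** mpow A n"
  by (induction n) (simp_all add: mpow_Suc matrix_mul_assoc[symmetric], metis matrix_mul_assoc)

lemma inv_unique: "A \<in> Isom_plus \<Longrightarrow> A ** B = mat 1 \<Longrightarrow> matrix_inv A = B"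
proof -
  assume A: "A \<in> Isom_plus" and B: "A ** B = mat 1"
  have "matrix_inv A = matrix_inv A ** (A ** B)" using B by simp
  also have "\<dots> = B" using isom_inv(2)[OF A] by (simp add: matrix_mul_assoc)
  finally show ?thesis .
qed

lemma inv_inv: assumes G: "is_subgroup G" and g: "g \<in> G" shows "matrix_inv (matrix_inv g) = g"
  using inv_unique[OF subgroup_isom[OF G subgroup_inv[OF G g]] isom_inv(2)[OF subgroup_isom[OF G g]]] .

definition conjm :: "real^4^4 \<Rightarrow> real^4^4 \<Rightarrow> real^4^4" where
  "conjm h x = matrix_inv h ** x ** h"

lemma conjm_G: "is_subgroup G \<Longrightarrow> h \<in> G \<Longrightarrow> x \<in> G \<Longrightarrow> conjm h x \<in> G"
  by (simp add: conjm_def subgroup_mul subgroup_inv)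

lemma conjm_mul: assumes G: "is_subgroup G" and h: "h \<in> G"
  shows "conjm h x ** conjm h y = conjm h (x ** y)"
proof -
  have "conjm h x ** conjm h y = matrix_inv h ** x ** (h ** matrix_inv h) ** y ** h"
    by (simp add: conjm_def matrix_mul_assoc)
  also have "\<dots> = conjm h (x ** y)" using isom_inv(1)[OF subgroup_isom[OF G h]]
    by (simp add: conjm_def matrix_mul_assoc)
  finally show ?thesis .
qed

lemma conjm_one: assumes G: "is_subgroup G" and h: "h \<in> G" shows "conjm h (mat 1) = mat 1"
  using isom_inv(2)[OF subgroup_isom[OF G h]] by (simp add: conjm_def)

lemma conjm_mpow: assumes G: "is_subgroup G" and h: "h \<in> G"
  shows "mpow (conjm h x) n = conjm h (mpow x n)"
  by (induction n) (simp_all add: mpow_Suc conjm_one[OF G h] conjm_mul[OF G h])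

lemma conjm_inv: assumes G: "is_subgroup G" and h: "h \<in> G" and x: "x \<in> G"
  shows "matrix_inv (conjm h x) = conjm h (matrix_inv x)"
proof (rule inv_unique)
  show "conjm h x \<in> Isom_plus" using subgroup_isom[OF G conjm_G[OF G h x]] .
  show "conjm h x ** conjm h (matrix_inv x) = mat 1"
    using conjm_mul[OF G h] isom_inv(1)[OF subgroup_isom[OF G x]] conjm_one[OF G h] by simp
qed

lemma conjm_zpow: assumes G: "is_subgroup G" and h: "h \<in> G" and x: "x \<in> G"
  shows "zpow (conjm h x) k = conjm h (zpow x k)"
  by (simp add: zpow_def conjm_mpow[OF G h] conjm_inv[OF G h x])

lemma conjm_cyc: assumes G: "is_subgroup G" and h: "h \<in> G" and x: "x \<in> G"
  shows "cyc (conjm h x) = conjm h ` cyc x"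
  by (auto simp: cyc_def conjm_zpow[OF G h x])

lemma conjm_back: assumes G: "is_subgroup G" and h: "h \<in> G"
  shows "conjm (matrix_inv h) (conjm h x) = x"
proof -
  have hi: "matrix_inv (matrix_inv h) = h" by (rule inv_inv[OF G h])
  have "conjm (matrix_inv h) (conjm h x) = (h ** matrix_inv h) ** x ** (h ** matrix_inv h)"
    by (simp add: conjm_def hi matrix_mul_assoc)
  then show ?thesis using isom_inv(1)[OF subgroup_isom[OF G h]] by simp
qed

lemma conjm_back2: assumes G: "is_subgroup G" and h: "h \<in> G"
  shows "conjm h (conjm (matrix_inv h) x) = x"
  using conjm_back[OF G subgroup_inv[OF G h]] inv_inv[OF G h] by simp

lemma zpow_G: "is_subgroup G \<Longrightarrow> g \<in> G \<Longrightarrow> zpow g k \<in> G"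
  by (simp add: zpow_def mpow_G subgroup_inv)

lemma cyc_G: "is_subgroup G \<Longrightarrow> g \<in> G \<Longrightarrow> cyc g \<subseteq> G"
  by (auto simp: cyc_def zpow_G)

lemma cyclic_sub: "is_subgroup G \<Longrightarrow> cyclic_subgroup_of G C \<Longrightarrow> C \<subseteq> G"
  unfolding cyclic_subgroup_of_def using cyc_G by blast

lemma conjm_maximal:
  assumes G: "is_subgroup G" and h: "h \<in> G" and C: "maximal_cyclic_subgroup G C"
  shows "maximal_cyclic_subgroup G (conjm h ` C)"
proof -
  obtain g where g: "g \<in> G" "C = cyc g" using C by (auto simp: maximal_cyclic_subgroup_def cyclic_subgroup_of_def)
  have hi: "matrix_inv h \<in> G" using subgroup_inv[OF G h] .
  have cyc1: "cyclic_subgroup_of G (conjm h ` C)"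
    unfolding cyclic_subgroup_of_def using conjm_cyc[OF G h g(1)] conjm_G[OF G h g(1)] g(2) by auto
  have "D = conjm h ` C" if D: "cyclic_subgroup_of G D" "conjm h ` C \<subseteq> D" for D
  proof -
    obtain d where d: "d \<in> G" "D = cyc d" using D by (auto simp: cyclic_subgroup_of_def)
    have DG: "D \<subseteq> G" using cyc_G[OF G d(1)] d by simp
    have CG: "C \<subseteq> G" using cyc_G[OF G g(1)] g by simp
    define D' where "D' = conjm (matrix_inv h) ` D"
    have D'c: "cyclic_subgroup_of G D'"
      unfolding cyclic_subgroup_of_def D'_def using conjm_cyc[OF G hi d(1)] conjm_G[OF G hi d(1)] d(2) by auto
    have "C \<subseteq> D'"
    proof
      fix c assume "c \<in> C"
      then have "conjm h c \<in> D" using D(2) by auto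
      then show "c \<in> D'" unfolding D'_def using conjm_back[OF G h, of c] by force
    qed
    then have "D' = C" using C D'c by (auto simp: maximal_cyclic_subgroup_def)
    then have "conjm h ` D' = conjm h ` C" by simp
    moreover have "conjm h ` D' = D" unfolding D'_def image_comp
      using conjm_back2[OF G h] by (simp add: comp_def)
    ultimately show ?thesis by simp
  qed
  then show ?thesis using cyc1 by (auto simp: maximal_cyclic_subgroup_def)
qed

lemma conjm_inj: assumes G: "is_subgroup G" and h: "h \<in> G" shows "inj (conjm h)"
  by (metis conjm_back[OF G h] injI)



lemma hdist_lt:
  assumes x: "x \<in> H3" and y: "y \<in> H3" and l: "lam > 0" and d: "hdist x y < lam"
  shows "- mink x y < cosh lam"
proof -
  have z: "- mink x y \<ge> 1" by (rule mink_ge1[OF x y])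
  have c: "cosh lam \<ge> 1" by (rule cosh_real_ge_1)
  have "arcosh (- mink x y) < arcosh (cosh lam)" using d l by (simp add: hdist_def arcosh_cosh_real)
  then show ?thesis using z c by simp
qed

lemma y0_bound: assumes k: "k \<in> H3" and y: "y \<in> H3" shows "y$0 \<le> 2 * k$0 * (- mink k y)"
proof -
  have "- mink k y \<ge> y$0 / (2 * k$0)" using mink_lb[OF k, of y] y by (simp add: H3_def)
  moreover have "k$0 > 0" using H3_pos[OF k] .
  ultimately show ?thesis by (simp add: divide_le_eq mult.commute mult.left_commute)
qed

lemma conj_disp:
  assumes G: "is_subgroup G" and h: "h \<in> G" and g: "g \<in> G"
  shows "mink (h *v x) (g *v (h *v x)) = mink x (conjm h g *v x)"
proof -
  have hI: "h \<in> Isom_plus" using subgroup_isom[OF G h] .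
  have "conjm h g *v x = matrix_inv h *v (g *v (h *v x))" by (simp add: conjm_def matrix_vector_mul_assoc matrix_mul_assoc)
  then have "mink x (conjm h g *v x) = mink (h *v x) (h *v (matrix_inv h *v (g *v (h *v x))))"
    using isom_lor[OF hI] by simp
  also have "\<dots> = mink (h *v x) (g *v (h *v x))" using isom_inv_vec[OF hI] by simp
  finally show ?thesis by simp
qed

lemma mpow_fix: "g *v p = p \<Longrightarrow> mpow g n *v p = p"
  by (induction n) (simp_all add: mpow_Suc matrix_vector_mul_assoc[symmetric])

lemma fix_trivial:
  assumes G: "is_subgroup G" and D: "discrete_group G" and T: "torsion_free G"
    and g: "g \<in> G" and p: "p \<in> H3" and fx: "g *v p = p"
  shows "g = mat 1"
proof (rule ccontr)
  assume g1: "g \<noteq> mat 1"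
  have "finite (range (mpow g))"
  proof (rule finite_bounded_subgroup[OF G D])
    show "range (mpow g) \<subseteq> G" using mpow_G[OF G g] by auto
    fix A assume "A \<in> range (mpow g)"
    then obtain n where A: "A = mpow g n" by auto
    have AI: "A \<in> Isom_plus" using subgroup_isom[OF G mpow_G[OF G g]] A by simp
    show "A$0$0 \<le> 2 * p$0 * p$0" using A00_bound[OF AI p] mpow_fix[OF fx] A by simp
  qed
  then have "\<not> inj (mpow g)" using finite_imageD infinite_UNIV_nat by blast
  then obtain a0 b0 where ab0: "mpow g a0 = mpow g b0" "a0 \<noteq> b0"
    unfolding inj_def by auto
  have "\<exists>a b. mpow g a = mpow g b \<and> a < b"
  proof (cases "a0 < b0")
    case True then show ?thesis using ab0 by blast
  next
    case False then have "b0 < a0" using ab0(2) by simp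
    then show ?thesis using ab0(1) by (intro exI[of _ b0] exI[of _ a0]) simp
  qed
  then obtain a b where ab: "mpow g a = mpow g b" "a < b" by blast
  define d where "d = b - a"
  have d1: "d \<ge> 1" using ab by (simp add: d_def)
  have "mpow g b = mpow g d ** mpow g a" using mpow_add[of g d a] ab by (simp add: d_def)
  then have eq: "mpow g d ** mpow g a = mpow g a" using ab by simp
  have aI: "mpow g a \<in> Isom_plus" using subgroup_isom[OF G mpow_G[OF G g]] .
  have "mpow g d = mpow g d ** (mpow g a ** matrix_inv (mpow g a))" using isom_inv(1)[OF aI] by simp
  also have "\<dots> = mpow g a ** matrix_inv (mpow g a)" by (simp add: matrix_mul_assoc eq)
  also have "\<dots> = mat 1" using isom_inv(1)[OF aI] .
  finally show False using T g g1 d1 unfolding torsion_free_def by blast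
qed

lemma compact_bound0:
  fixes K :: "(real^4) set"
  assumes "compact K" obtains R where "R \<ge> 0" "\<And>k. k \<in> K \<Longrightarrow> \<bar>k$0\<bar> \<le> (R::real)"
proof -
  obtain R where R: "\<forall>k\<in>K. norm (k::real^4) \<le> R" using compact_imp_bounded[OF assms] bounded_iff by blast
  have "\<bar>k$0\<bar> \<le> \<bar>R\<bar>" if "k \<in> K" for k
  proof -
    have "\<bar>k$0\<bar> \<le> norm k" by (rule component_le_norm_cart)
    also have "\<dots> \<le> R" using R that by blast
    also have "\<dots> \<le> \<bar>R\<bar>" by simp
    finally show ?thesis .
  qed
  then show ?thesis using that[of "\<bar>R\<bar>"] by simp
qed

lemma finite_disp:
  assumes G: "is_subgroup G" and D: "discrete_group G" and K: "compact K" "K \<subseteq> H3"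
  shows "finite {g \<in> G. \<exists>k\<in>K. - mink k (g *v k) \<le> beta}"
proof -
  obtain R where R: "R \<ge> 0" "\<And>k. k \<in> K \<Longrightarrow> \<bar>k$0\<bar> \<le> R" using compact_bound0[OF K(1)] by blast
  show ?thesis
  proof (rule finite_bounded_subgroup[OF G D, where M = "4 * R * R * \<bar>beta\<bar>"])
    show "{g \<in> G. \<exists>k\<in>K. - mink k (g *v k) \<le> beta} \<subseteq> G" by auto
    fix A assume "A \<in> {g \<in> G. \<exists>k\<in>K. - mink k (g *v k) \<le> beta}"
    then obtain k where A: "A \<in> G" and k: "k \<in> K" and kb: "- mink k (A *v k) \<le> beta" by auto
    have AI: "A \<in> Isom_plus" using subgroup_isom[OF G A] .
    have kH: "k \<in> H3" using k K by auto
    have yH: "A *v k \<in> H3" using isom_H3[OF AI kH] .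
    have k0: "k$0 > 0" using H3_pos[OF kH] .
    have kR: "k$0 \<le> R" using R(2)[OF k] by simp
    have "(A *v k)$0 \<le> 2 * k$0 * (- mink k (A *v k))" by (rule y0_bound[OF kH yH])
    also have "\<dots> \<le> 2 * k$0 * \<bar>beta\<bar>" using kb k0 by (intro mult_left_mono) auto
    finally have y0: "(A *v k)$0 \<le> 2 * k$0 * \<bar>beta\<bar>" .
    have "A$0$0 \<le> 2 * k$0 * (A *v k)$0" by (rule A00_bound[OF AI kH])
    also have "\<dots> \<le> 2 * k$0 * (2 * k$0 * \<bar>beta\<bar>)" using y0 k0 by (intro mult_left_mono) auto
    also have "\<dots> = 4 * (k$0 * k$0) * \<bar>beta\<bar>" by simp
    also have "\<dots> \<le> 4 * (R * R) * \<bar>beta\<bar>"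
    proof -
      have "k$0 * k$0 \<le> R * R" using mult_mono[OF kR kR] k0 R(1) by simp
      then show ?thesis by (intro mult_right_mono) auto
    qed
    finally show "A$0$0 \<le> 4 * R * R * \<bar>beta\<bar>" by (simp add: mult.assoc)
  qed
qed



lemma perp_aux:
  assumes p: "p \<in> H3" and v: "mink v p = 0"
  shows "(p$0)^2 * mink v v \<ge> sp v v"
proof -
  have e: "v$0 * p$0 = sp v p" using v by (simp add: mink_sp)
  have "(v$0 * p$0)^2 \<le> sp v v * sp p p" using cs3[of v p] e by simp
  also have "\<dots> = sp v v * ((p$0)^2 - 1)" using H3_sp[OF p] by simp
  finally have "(v$0)^2 * (p$0)^2 \<le> sp v v * (p$0)^2 - sp v v" by (simp add: power_mult_distrib algebra_simps)
  then show ?thesis by (simp add: mink_sp power2_eq_square algebra_simps)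
qed

lemma perp_nonneg:
  assumes p: "p \<in> H3" and v: "mink v p = 0"
  shows "mink v v \<ge> 0"
proof -
  have a: "(p$0)^2 * mink v v \<ge> 0" using perp_aux[OF p v] sp_nonneg[of v] by linarith
  have "(p$0)^2 > 0" using H3_pos[OF p] by simp
  then show ?thesis using a by (simp add: zero_le_mult_iff)
qed

lemma perp_zero:
  assumes p: "p \<in> H3" and v: "mink v p = 0" and n: "mink v v \<le> 0"
  shows "v = 0"
proof -
  have "mink v v = 0" using perp_nonneg[OF p v] n by simp
  then have s0: "sp v v \<le> 0" using perp_aux[OF p v] by simp
  have "v$1 * v$1 \<ge> 0" "v$2 * v$2 \<ge> 0" "v$3 * v$3 \<ge> 0" by simp_all
  then have "v$1 * v$1 = 0 \<and> v$2 * v$2 = 0 \<and> v$3 * v$3 = 0" using s0 unfolding sp_def by linarith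
  then have z: "v$1 = 0" "v$2 = 0" "v$3 = 0" by simp_all
  then have "sp v p = 0" by (simp add: sp_def)
  then have "v$0 * p$0 = 0" using v by (simp add: mink_sp)
  then have "v$0 = 0" using H3_pos[OF p] by simp
  then show ?thesis using z exhaust4 by (metis vec_eq_iff zero_index)
qed

lemma H3_eq:
  assumes x: "x \<in> H3" and y: "y \<in> H3" and m: "mink x y = -1"
  shows "x = y"
proof -
  have xx: "mink x x = -1" and yy: "mink y y = -1" using x y by (simp_all add: H3_def)
  have "mink (x - y) x = 0" using xx m by (simp add: mink_lin mink_sym[of y x])
  moreover have "mink (x - y) (x - y) \<le> 0" using xx yy m by (simp add: mink_lin mink_sym[of y x])
  ultimately have "x - y = 0" using perp_zero[OF x] by blast
  then show ?thesis by simp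
qed

lemma lor_cs:
  assumes p: "p \<in> H3" and y: "mink y p = 0" and z: "mink z p = 0"
  shows "(mink y z)^2 \<le> mink y y * mink z z"
proof (cases "mink z z = 0")
  case True
  then have "z = 0" using perp_zero[OF p z] by simp
  then show ?thesis by simp
next
  case False
  define a where "a = mink y y"
  define b where "b = mink y z"
  define c where "c = mink z z"
  have c: "c > 0" using False perp_nonneg[OF p z] by (simp add: c_def)
  define t where "t = - b / c"
  have "mink (y + t *\<^sub>R z) p = 0" using y z by (simp add: mink_lin)
  then have "mink (y + t *\<^sub>R z) (y + t *\<^sub>R z) \<ge> 0" using perp_nonneg[OF p] by blast
  then have "a + 2 * t * b + t * t * c \<ge> 0"
    by (simp add: mink_lin mink_sym[of z y] a_def b_def c_def algebra_simps)
  then have "a - b * b / c \<ge> 0" using c by (simp add: t_def field_simps power2_eq_square)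
  then have "b * b \<le> a * c" using c by (simp add: field_simps)
  then show ?thesis by (simp add: a_def b_def c_def power2_eq_square)
qed

lemma cont_disp: "continuous_on K (\<lambda>k::real^4. - mink k (g *v k))"
proof -
  have l: "continuous_on K (\<lambda>k. g *v k)" by (intro linear_continuous_on matrix_vector_mul_bounded_linear)
  have "continuous_on K (\<lambda>k. (g *v k) $ i)" for i
    by (rule continuous_on_compose2[OF _ l, where g="\<lambda>v. v $ i" and t=UNIV]) (auto intro: continuous_intros)
  then show ?thesis unfolding mink_def by (intro continuous_intros)
qed

lemma min_disp:
  assumes G: "is_subgroup G" and D: "discrete_group G" and CC: "cocompact G" and g: "g \<in> G"
  shows "\<exists>p\<in>H3. \<forall>x\<in>H3. - mink p (g *v p) \<le> - mink x (g *v x)"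
proof -
  obtain K where K: "compact K" "K \<subseteq> H3" "(\<Union>h\<in>G. act h ` K) = H3" using CC by (auto simp: cocompact_def)
  have cover: "\<exists>h\<in>G. \<exists>k\<in>K. x = h *v k" if "x \<in> H3" for x
  proof -
    have "x \<in> (\<Union>h\<in>G. act h ` K)" using K(3) that by simp
    then show ?thesis by (auto simp: act_def)
  qed
  define val where "val = (\<lambda>x. - mink x (g *v x))"
  define beta where "beta = val e0"
  define Fs where "Fs = {d \<in> G. \<exists>k\<in>K. - mink k (d *v k) \<le> beta}"
  define Cj where "Cj = {d \<in> Fs. \<exists>h\<in>G. d = conjm h g}"
  have fin: "finite Cj" by (rule finite_subset[OF _ finite_disp[OF G D K(1,2), of beta]]) (auto simp: Cj_def Fs_def)
  have disp_conj: "val (h *v k) = - mink k (conjm h g *v k)" if "h \<in> G" for h k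
    using conj_disp[OF G that g] by (simp add: val_def)
  obtain h0 k0 where h0: "h0 \<in> G" "k0 \<in> K" "e0 = h0 *v k0" using cover[OF e0_H3] by blast
  have Kne: "K \<noteq> {}" using h0 by auto
  define mval where "mval = (\<lambda>d. SOME k. k \<in> K \<and> (\<forall>y\<in>K. - mink k (d *v k) \<le> - mink y (d *v y)))"
  have mv: "mval d \<in> K \<and> (\<forall>y\<in>K. - mink (mval d) (d *v mval d) \<le> - mink y (d *v y))" for d
  proof -
    have "\<exists>k\<in>K. \<forall>y\<in>K. - mink k (d *v k) \<le> - mink y (d *v y)"
      by (rule continuous_attains_inf[OF K(1) Kne cont_disp])
    then have "\<exists>k. k \<in> K \<and> (\<forall>y\<in>K. - mink k (d *v k) \<le> - mink y (d *v y))" by blast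
    then show ?thesis unfolding mval_def by (rule someI_ex)
  qed
  define m where "m = (\<lambda>d. - mink (mval d) (d *v mval d))"
  have c0: "conjm h0 g \<in> Cj"
    using disp_conj[OF h0(1), of k0] h0 conjm_G[OF G h0(1) g] by (auto simp: Cj_def Fs_def beta_def)
  define mm where "mm = Min (m ` Cj)"
  have "mm \<in> m ` Cj" unfolding mm_def using fin c0 by (intro Min_in) auto
  then obtain ds where ds: "ds \<in> Cj" "m ds = mm" by auto
  obtain hs where hs: "hs \<in> G" "ds = conjm hs g" using ds(1) by (auto simp: Cj_def)
  define p where "p = hs *v mval ds"
  have pH: "p \<in> H3" using isom_H3[OF subgroup_isom[OF G hs(1)]] mv[of ds] K(2) by (auto simp: p_def)
  have valp: "val p = mm" using disp_conj[OF hs(1), of "mval ds"] ds(2) hs(2) by (simp add: p_def m_def)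
  have mm_le: "mm \<le> m d" if "d \<in> Cj" for d unfolding mm_def using fin that by simp
  have "mm \<le> beta"
  proof -
    have "mm \<le> m (conjm h0 g)" using mm_le[OF c0] .
    also have "\<dots> \<le> - mink k0 (conjm h0 g *v k0)" using mv[of "conjm h0 g"] h0(2) by (simp add: m_def)
    also have "\<dots> = beta" using disp_conj[OF h0(1), of k0] h0(3) by (simp add: beta_def)
    finally show ?thesis .
  qed
  have "val p \<le> val x" if x: "x \<in> H3" for x
  proof (cases "val x \<le> beta")
    case False then show ?thesis using valp \<open>mm \<le> beta\<close> by simp
  next
    case True
    obtain h k where hk: "h \<in> G" "k \<in> K" "x = h *v k" using cover[OF x] by blast
    have vx: "val x = - mink k (conjm h g *v k)" using disp_conj[OF hk(1)] hk(3) by simp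
    have dC: "conjm h g \<in> Cj" using True vx hk conjm_G[OF G hk(1) g] by (auto simp: Cj_def Fs_def)
    have "val p = mm" by (rule valp)
    also have "\<dots> \<le> m (conjm h g)" by (rule mm_le[OF dC])
    also have "\<dots> \<le> val x" using mv[of "conjm h g"] hk(2) vx by (simp add: m_def)
    finally show ?thesis .
  qed
  then show ?thesis using pH unfolding val_def by blast
qed



lemma lin_quad:
  fixes a b eta :: real
  assumes eta: "eta > 0" and h: "\<And>t. \<bar>t\<bar> < eta \<Longrightarrow> t * a + t^2 * b \<ge> 0"
  shows "a = 0"
proof (rule ccontr)
  assume a: "a \<noteq> 0"
  define tau where "tau = min (eta/2) (\<bar>a\<bar> / (2 * (\<bar>b\<bar> + 1)))"
  have tau: "tau > 0" using eta a by (simp add: tau_def)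
  have te: "tau < eta" using eta by (simp add: tau_def)
  have tb: "tau * (\<bar>b\<bar> + 1) \<le> \<bar>a\<bar> / 2"
  proof -
    have "tau \<le> \<bar>a\<bar> / (2 * (\<bar>b\<bar> + 1))" by (simp add: tau_def)
    then have "tau * (\<bar>b\<bar> + 1) \<le> \<bar>a\<bar> / (2 * (\<bar>b\<bar> + 1)) * (\<bar>b\<bar> + 1)"
      by (intro mult_right_mono) auto
    also have "\<dots> = \<bar>a\<bar> / 2"
    proof -
      have hb: "\<bar>b\<bar> + 1 \<noteq> 0" by (metis abs_ge_zero add_nonneg_pos not_less_iff_gr_or_eq zero_less_one)
      then show ?thesis by (simp add: field_simps)
    qed
    finally show ?thesis .
  qed
  define t where "t = (if a > 0 then - tau else tau)"
  have at: "\<bar>t\<bar> = tau" using tau by (simp add: t_def)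
  have ta: "t * a = - (tau * \<bar>a\<bar>)" using a by (auto simp: t_def)
  have t2: "t^2 = tau^2" using at by (metis power2_abs)
  have "t^2 * b \<le> tau^2 * \<bar>b\<bar>" unfolding t2 by (intro mult_left_mono) auto
  also have "\<dots> = tau * (tau * \<bar>b\<bar>)" by (simp add: power2_eq_square)
  also have "\<dots> \<le> tau * (\<bar>a\<bar> / 2)"
  proof -
    have "tau * \<bar>b\<bar> \<le> \<bar>a\<bar> / 2" using tb tau by (simp add: algebra_simps)
    then show ?thesis using tau by (intro mult_left_mono) auto
  qed
  finally have "t * a + t^2 * b \<le> - (tau * \<bar>a\<bar>) + tau * (\<bar>a\<bar> / 2)" using ta by linarith
  also have "\<dots> < 0" using tau a by simp
  finally show False using h[of t] at te by linarith
qed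

lemma vec_nth_cont[continuous_intros]: "continuous_on S (\<lambda>x::real^4. x $ i)"
  by (rule linear_continuous_on) (rule bounded_linear_vec_nth)

lemma cont_mink2: "continuous_on S (\<lambda>y::real^4. mink y y)"
  unfolding mink_def by (intro continuous_intros)

lemma open_future: "open {y::real^4. mink y y < 0 \<and> y$0 > 0}"
proof -
  have "open {y::real^4. mink y y < 0}"
    using open_Collect_less[OF cont_mink2 continuous_on_const, of 0] by simp
  moreover have "open {y::real^4. 0 < y$0}"
    by (rule open_Collect_less) (auto intro: continuous_intros)
  ultimately show ?thesis by (simp add: Collect_conj_eq open_Int)
qed

lemma normalize_H3:
  assumes "mink y y < 0" "y$0 > 0"
  shows "(1 / sqrt (- mink y y)) *\<^sub>R y \<in> H3"
proof -
  define s where "s = sqrt (- mink y y)"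
  have s: "s > 0" using assms by (simp add: s_def)
  have s2: "s^2 = - mink y y" using assms by (simp add: s_def)
  have "mink ((1/s) *\<^sub>R y) ((1/s) *\<^sub>R y) = (1/s)^2 * mink y y" by (simp add: mink_lin power2_eq_square)
  also have "\<dots> = -1" using s s2 assms(1) by (simp add: power_divide field_simps)
  finally show ?thesis using s assms by (simp add: H3_def s_def[symmetric])
qed

lemma lagrange:
  assumes G: "is_subgroup G" and g: "g \<in> G" and p: "p \<in> H3"
    and mn: "\<And>x. x \<in> H3 \<Longrightarrow> - mink p (g *v p) \<le> - mink x (g *v x)"
  shows "g *v p + matrix_inv g *v p = (2 * (- mink p (g *v p))) *\<^sub>R p"
proof -
  define c where "c = - mink p (g *v p)"
  have gI: "g \<in> Isom_plus" using subgroup_isom[OF G g] .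
  define R where "R = (\<lambda>y. - mink y (g *v y) + c * mink y y)"
  have Rnn: "R y \<ge> 0" if "mink y y < 0" "y$0 > 0" for y
  proof -
    define s where "s = sqrt (- mink y y)"
    have s: "s > 0" using that by (simp add: s_def)
    have s2: "s^2 = - mink y y" using that by (simp add: s_def)
    have xH: "(1/s) *\<^sub>R y \<in> H3" using normalize_H3[OF that] by (simp add: s_def)
    have "c \<le> - mink ((1/s) *\<^sub>R y) (g *v ((1/s) *\<^sub>R y))" using mn[OF xH] by (simp add: c_def)
    also have "\<dots> = (1/s)^2 * (- mink y (g *v y))"
      by (simp add: mink_lin matrix_vector_mult_scaleR power2_eq_square)
    finally have "c * s^2 \<le> - mink y (g *v y)" using s by (simp add: field_simps power2_eq_square)
    then show ?thesis using s2 by (simp add: R_def)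
  qed
  have pp: "mink p p = -1" using p by (simp add: H3_def)
  have Rp: "R p = 0" using pp by (simp add: R_def c_def)
  define w where "w = g *v p + matrix_inv g *v p - (2 * c) *\<^sub>R p"
  have "mink v w = 0" for v
  proof -
    obtain e where e: "e > 0" "ball p e \<subseteq> {y::real^4. mink y y < 0 \<and> y$0 > 0}"
      using open_future p unfolding open_contains_ball by (force simp: H3_def)
    define eta where "eta = e / (norm v + 1)"
    have nv: "norm v + 1 > 0" by (simp add: add_nonneg_pos)
    have eta: "eta > 0" using e nv by (simp add: eta_def)
    have expand: "R (p + t *\<^sub>R v) = R p + t * (- mink v w) + t^2 * R v" for t
    proof -
      have a: "mink p (g *v v) = mink v (matrix_inv g *v p)"
        using isom_lor[OF gI, of "matrix_inv g *v p" v] isom_inv_vec(1)[OF gI] mink_sym by metis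
      have b: "mink v (g *v p) = mink v (g *v p)" ..
      have gv: "g *v (p + t *\<^sub>R v) = g *v p + t *\<^sub>R (g *v v)"
        by (simp add: matrix_vector_right_distrib matrix_vector_mult_scaleR)
      have h1: "mink (p + t *\<^sub>R v) (g *v (p + t *\<^sub>R v)) =
          mink p (g *v p) + t * mink p (g *v v) + t * mink v (g *v p) + t * t * mink v (g *v v)"
        unfolding gv by (simp only: mink_add_left mink_add_right mink_scale_left mink_scale_right) (simp add: algebra_simps)
      have h2: "mink (p + t *\<^sub>R v) (p + t *\<^sub>R v) = mink p p + t * mink p v + t * mink v p + t * t * mink v v"
        by (simp only: mink_add_left mink_add_right mink_scale_left mink_scale_right) (simp add: algebra_simps)
      have h3: "mink v w = mink v (g *v p) + mink v (matrix_inv g *v p) - 2 * c * mink v p"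
        unfolding w_def by (simp only: mink_add_right mink_diff_right mink_scale_right)
      have h4: "mink p v = mink v p" by (rule mink_sym)
      show ?thesis unfolding R_def h1 h2 h3 h4 a by (simp add: algebra_simps power2_eq_square)
    qed
    have "t * (- mink v w) + t^2 * R v \<ge> 0" if t: "\<bar>t\<bar> < eta" for t
    proof -
      have "dist p (p + t *\<^sub>R v) = \<bar>t\<bar> * norm v" by (simp add: dist_norm)
      also have "\<dots> \<le> \<bar>t\<bar> * (norm v + 1)" by (intro mult_left_mono) auto
      also have "\<dots> < eta * (norm v + 1)" using t nv by (intro mult_strict_right_mono) auto
      also have "\<dots> = e" using nv by (simp add: eta_def)
      finally have "p + t *\<^sub>R v \<in> ball p e" by simp
      then have "R (p + t *\<^sub>R v) \<ge> 0" using e(2) Rnn by blast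
      then show ?thesis using expand[of t] Rp by simp
    qed
    then have "- mink v w = 0" using lin_quad[OF eta] by blast
    then show ?thesis by simp
  qed
  then have "w = 0" using mink_nondeg by blast
  then have "g *v p + matrix_inv g *v p = (2 * c) *\<^sub>R p" unfolding w_def by (simp only: right_minus_eq)
  then show ?thesis unfolding c_def .
qed



locale eig =
  fixes G :: "(real^4^4) set" and g :: "real^4^4" and p :: "real^4" and c :: real
  assumes G: "is_subgroup G" and g: "g \<in> G" and p: "p \<in> H3"
    and c_def: "c = - mink p (g *v p)" and c1: "c > 1"
    and E: "g *v p + matrix_inv g *v p = (2 * c) *\<^sub>R p"
begin

definition q where "q = g *v p"
definition gi where "gi = matrix_inv g"

lemma gI: "g \<in> Isom_plus" using subgroup_isom[OF G g] .
lemma giI: "gi \<in> Isom_plus" using subgroup_isom[OF G subgroup_inv[OF G g]] by (simp add: gi_def)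
lemma g_gi: "g *v (gi *v x) = x" using isom_inv_vec(1)[OF gI] by (simp add: gi_def)
lemma gi_g: "gi *v (g *v x) = x" using isom_inv_vec(2)[OF gI] by (simp add: gi_def)

lemma qH: "q \<in> H3" using isom_H3[OF gI p] by (simp add: q_def)
lemma pp: "mink p p = -1" using p by (simp add: H3_def)
lemma qq: "mink q q = -1" using qH by (simp add: H3_def)
lemma pq: "mink p q = - c" by (simp add: c_def q_def)
lemma qp: "mink q p = - c" using pq mink_sym by metis

lemma gi_p: "gi *v p = (2 * c) *\<^sub>R p - q"
  using E by (simp add: gi_def q_def algebra_simps)

lemma g_q: "g *v q = (2 * c) *\<^sub>R q - p"
proof -
  have "g *v (g *v p + gi *v p) = (2 * c) *\<^sub>R q" using E by (simp add: gi_def q_def matrix_vector_mult_scaleR)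
  then have "g *v q + p = (2 * c) *\<^sub>R q" by (simp add: matrix_vector_right_distrib g_gi q_def)
  then show ?thesis by (simp add: algebra_simps)
qed

lemma gi_q: "gi *v q = p" by (simp add: q_def gi_g)

definition Eg where "Eg x \<longleftrightarrow> g *v x + gi *v x = (2 * c) *\<^sub>R x"

lemma Eg_lin: "Eg x \<Longrightarrow> Eg y \<Longrightarrow> Eg (a *\<^sub>R x + b *\<^sub>R y)"
proof -
  assume x: "Eg x" and y: "Eg y"
  have "g *v (a *\<^sub>R x + b *\<^sub>R y) + gi *v (a *\<^sub>R x + b *\<^sub>R y)
      = a *\<^sub>R (g *v x + gi *v x) + b *\<^sub>R (g *v y + gi *v y)"
    by (simp add: matrix_vector_right_distrib matrix_vector_mult_scaleR scaleR_right_distrib)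
  also have "\<dots> = a *\<^sub>R ((2 * c) *\<^sub>R x) + b *\<^sub>R ((2 * c) *\<^sub>R y)" using x y by (simp add: Eg_def)
  also have "\<dots> = (2 * c) *\<^sub>R (a *\<^sub>R x + b *\<^sub>R y)" by (simp add: scaleR_right_distrib mult_ac)
  finally show ?thesis by (simp add: Eg_def)
qed

lemma Eg_p: "Eg p" using E by (simp add: Eg_def gi_def)
lemma Eg_q: "Eg q" unfolding Eg_def g_q gi_q by simp

lemma Eg_diff: "Eg x \<Longrightarrow> Eg (x - a *\<^sub>R p - b *\<^sub>R q)"
proof -
  assume x: "Eg x"
  have "Eg ((-a) *\<^sub>R p + (-b) *\<^sub>R q)" using Eg_lin[OF Eg_p Eg_q] .
  then have "Eg (1 *\<^sub>R x + 1 *\<^sub>R ((-a) *\<^sub>R p + (-b) *\<^sub>R q))" using Eg_lin[OF x] by blast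
  then show ?thesis by (simp add: algebra_simps)
qed

lemma cc1: "c * c > 1"
proof -
  have "c * c > 1 * 1" using c1 by (intro mult_strict_mono) auto
  then show ?thesis by simp
qed

lemma indep: "a *\<^sub>R p + b *\<^sub>R q = 0 \<Longrightarrow> a = 0 \<and> b = 0"
proof -
  assume h: "a *\<^sub>R p + b *\<^sub>R q = 0"
  have h1: "mink (a *\<^sub>R p + b *\<^sub>R q) p = 0" and h2: "mink (a *\<^sub>R p + b *\<^sub>R q) q = 0" using h by simp_all
  have "mink (a *\<^sub>R p + b *\<^sub>R q) p = a * mink p p + b * mink q p" by (simp only: mink_add_left mink_scale_left)
  then have e1: "- a - b * c = 0" using h1 pp qp by simp
  have "mink (a *\<^sub>R p + b *\<^sub>R q) q = a * mink p q + b * mink q q" by (simp only: mink_add_left mink_scale_left)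
  then have e2: "- a * c - b = 0" using h2 pq qq by simp
  have a: "a = - (b * c)" using e1 by linarith
  have "b * (c * c - 1) = - a * c - b" unfolding a by (simp add: algebra_simps)
  then have "b * (c * c - 1) = 0" using e2 by linarith
  moreover have "c * c - 1 \<noteq> 0" using cc1 by simp
  ultimately have "b = 0" by simp
  then show ?thesis using e1 by simp
qed

lemma span:
  assumes x: "Eg x" shows "\<exists>a b. x = a *\<^sub>R p + b *\<^sub>R q"
proof -
  define X where "X = mink x p"
  define Y where "Y = mink x q"
  define a where "a = (Y * c - X) / (1 - c * c)"
  define b where "b = - Y - a * c"
  have cc: "1 - c * c \<noteq> 0" using cc1 by simp
  have ha: "a * (1 - c * c) = Y * c - X" using cc by (simp add: a_def)
  define y where "y = x - a *\<^sub>R p - b *\<^sub>R q"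
  have yp: "mink y p = 0"
  proof -
    have "mink y p = X + a + b * c" by (simp add: y_def mink_lin pp qp X_def)
    also have "\<dots> = X + a * (1 - c * c) - Y * c" by (simp add: b_def algebra_simps)
    also have "\<dots> = 0" using ha by simp
    finally show ?thesis .
  qed
  have yq: "mink y q = 0"
  proof -
    have "mink y q = Y + a * c + b" by (simp add: y_def mink_lin qq pq Y_def)
    also have "\<dots> = 0" by (simp add: b_def)
    finally show ?thesis .
  qed
  have Ey: "Eg y" using Eg_diff[OF x] by (simp add: y_def)
  have s1: "mink (gi *v y) y = mink y (g *v y)"
    using isom_lor[OF gI, of "gi *v y" y] g_gi by simp
  have "mink (g *v y + gi *v y) y = 2 * c * mink y y" using Ey by (simp add: Eg_def mink_lin)
  then have gyy: "mink (g *v y) y = c * mink y y" using s1 mink_sym[of y "g *v y"] by (simp add: mink_lin)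
  have gyp: "mink (g *v y) p = 0"
  proof -
    have "mink (g *v y) p = mink (gi *v (g *v y)) (gi *v p)" using isom_lor[OF giI] by simp
    also have "\<dots> = mink y ((2 * c) *\<^sub>R p - q)" by (simp add: gi_g gi_p)
    also have "\<dots> = 0" using yp yq by (simp add: mink_lin mink_sym[of y])
    finally show ?thesis .
  qed
  have gygy: "mink (g *v y) (g *v y) = mink y y" using isom_lor[OF gI] .
  have "(c * mink y y)^2 \<le> mink y y * mink y y"
    using lor_cs[OF p gyp yp] gyy gygy by (simp add: mink_sym[of y "g *v y"])
  then have "(mink y y)^2 * (c * c - 1) \<le> 0" by (simp add: power2_eq_square algebra_simps)
  moreover have "c * c - 1 > 0" using cc1 by simp
  ultimately have "(mink y y)^2 \<le> 0" by (simp add: mult_le_0_iff)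
  then have "mink y y = 0" by simp
  then have "y = 0" using perp_zero[OF p yp] by simp
  then show ?thesis by (intro exI[of _ a] exI[of _ b]) (simp add: y_def algebra_simps)
qed


lemma Eg_n: "Eg (q - mu *\<^sub>R p)"
  using Eg_lin[OF Eg_q Eg_p, of 1 "- mu"] by simp

lemma g_n: assumes mu: "mu * mu - 2 * c * mu + 1 = 0"
  shows "g *v (q - mu *\<^sub>R p) = (2 * c - mu) *\<^sub>R (q - mu *\<^sub>R p)"
proof -
  have nm: "(2 * c - mu) * mu = 1" using mu by (simp add: algebra_simps)
  have "g *v (q - mu *\<^sub>R p) = (2 * c) *\<^sub>R q - p - mu *\<^sub>R q"
    by (simp add: matrix_vector_mult_diff_distrib matrix_vector_mult_scaleR g_q q_def[symmetric])
  also have "\<dots> = (2 * c - mu) *\<^sub>R q - ((2 * c - mu) * mu) *\<^sub>R p" using nm by (simp add: algebra_simps)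
  also have "\<dots> = (2 * c - mu) *\<^sub>R (q - mu *\<^sub>R p)" by (simp add: algebra_simps)
  finally show ?thesis .
qed

lemma root_eigen:
  assumes rg: "\<And>x. r *v (g *v x) = g *v (r *v x)" and rgi: "\<And>x. r *v (gi *v x) = gi *v (r *v x)"
    and mu: "mu * mu - 2 * c * mu + 1 = 0"
  shows "\<exists>\<beta>. r *v (q - mu *\<^sub>R p) = \<beta> *\<^sub>R (q - mu *\<^sub>R p)"
proof -
  define n where "n = q - mu *\<^sub>R p"
  define nu where "nu = 2 * c - mu"
  have nm: "nu * mu = 1" using mu by (simp add: nu_def algebra_simps)
  have En: "Eg n" using Eg_n by (simp add: n_def)
  have "Eg (r *v n)"
  proof -
    have "g *v (r *v n) + gi *v (r *v n) = r *v (g *v n + gi *v n)"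
      by (simp add: rg rgi matrix_vector_right_distrib)
    also have "\<dots> = (2 * c) *\<^sub>R (r *v n)" using En by (simp add: Eg_def matrix_vector_mult_scaleR)
    finally show ?thesis by (simp add: Eg_def)
  qed
  then obtain a b where ab: "r *v n = a *\<^sub>R p + b *\<^sub>R q" using span by blast
  have gn: "g *v n = nu *\<^sub>R n" using g_n[OF mu] by (simp add: n_def nu_def)
  have "g *v (r *v n) = nu *\<^sub>R (r *v n)" by (simp add: rg[symmetric] gn matrix_vector_mult_scaleR)
  then have "a *\<^sub>R q + b *\<^sub>R ((2 * c) *\<^sub>R q - p) = nu *\<^sub>R (a *\<^sub>R p + b *\<^sub>R q)"
    unfolding ab by (simp add: matrix_vector_right_distrib matrix_vector_mult_scaleR g_q q_def[symmetric])
  then have "(- b - nu * a) *\<^sub>R p + (a + 2 * c * b - nu * b) *\<^sub>R q = 0"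
    by (simp add: algebra_simps)
  then have "- b - nu * a = 0" using indep by blast
  then have bb: "b = - (nu * a)" by linarith
  have "r *v n = (- (nu * a)) *\<^sub>R n"
  proof -
    have "(- (nu * a)) *\<^sub>R n = (- (nu * a)) *\<^sub>R q + ((nu * mu) * a) *\<^sub>R p"
      by (simp add: n_def algebra_simps)
    also have "\<dots> = a *\<^sub>R p + b *\<^sub>R q" using nm bb by simp
    finally show ?thesis using ab by simp
  qed
  then show ?thesis unfolding n_def by blast
qed

lemma mpow_eigen: "r *v n = \<beta> *\<^sub>R n \<Longrightarrow> mpow r k *v n = (\<beta> ^ k) *\<^sub>R n"
  by (induction k) (simp_all add: mpow_Suc matrix_vector_mul_assoc[symmetric] matrix_vector_mult_scaleR)

lemma n_nz: "q - mu *\<^sub>R p \<noteq> 0"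
proof
  assume "q - mu *\<^sub>R p = 0"
  then have "(- mu) *\<^sub>R p + 1 *\<^sub>R q = 0" by (simp add: algebra_simps)
  then show False using indep[of "- mu" 1] by simp
qed

lemma pow_abs_bound:
  fixes beta nu :: real
  assumes m: "m \<ge> 1" and e: "beta ^ m = nu"
  shows "\<bar>beta\<bar> \<le> max 1 \<bar>nu\<bar>"
proof (cases "\<bar>beta\<bar> \<le> 1")
  case True then show ?thesis by simp
next
  case False
  then have "\<bar>beta\<bar> \<le> \<bar>beta\<bar> ^ m" using m by (intro self_le_power) auto
  also have "\<dots> = \<bar>nu\<bar>" using e power_abs[of beta m] by simp
  finally show ?thesis by simp
qed


definition s where "s = sqrt (c * c - 1)"
definition mu1 where "mu1 = c + s"
definition mu2 where "mu2 = c - s"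

lemma s_pos: "s > 0" using cc1 by (simp add: s_def)
lemma s2: "s * s = c * c - 1" using cc1 by (simp add: s_def)
lemma mu1_eq: "mu1 * mu1 - 2 * c * mu1 + 1 = 0"
proof -
  have "mu1 * mu1 - 2 * c * mu1 + 1 = s * s - c * c + 1" by (simp add: mu1_def algebra_simps)
  then show ?thesis using s2 by simp
qed
lemma mu2_eq: "mu2 * mu2 - 2 * c * mu2 + 1 = 0"
proof -
  have "mu2 * mu2 - 2 * c * mu2 + 1 = s * s - c * c + 1" by (simp add: mu2_def algebra_simps)
  then show ?thesis using s2 by simp
qed
lemma s_lt_c: "s < c"
proof (rule ccontr)
  assume "\<not> s < c"
  then have "c * c \<le> s * s" using c1 by (intro mult_mono) auto
  then show False using s2 by simp
qed
lemma mu2_pos: "mu2 > 0" using s_lt_c by (simp add: mu2_def)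
lemma mu1_pos: "mu1 > 0" using s_pos c1 by (simp add: mu1_def)
lemma nu1: "2 * c - mu1 = mu2" by (simp add: mu1_def mu2_def)
lemma nu2: "2 * c - mu2 = mu1" by (simp add: mu1_def mu2_def)

lemma root_beta:
  assumes rg: "\<And>x. r *v (g *v x) = g *v (r *v x)" and rgi: "\<And>x. r *v (gi *v x) = gi *v (r *v x)"
    and mu: "mu * mu - 2 * c * mu + 1 = 0" and nupos: "2 * c - mu > 0"
    and rm: "mpow r m = g" and m: "m \<ge> 1"
  obtains beta where "r *v (q - mu *\<^sub>R p) = beta *\<^sub>R (q - mu *\<^sub>R p)" "\<bar>beta\<bar> \<le> max 1 (2 * c - mu)"
proof -
  obtain beta where b: "r *v (q - mu *\<^sub>R p) = beta *\<^sub>R (q - mu *\<^sub>R p)" using root_eigen[OF rg rgi mu] by blast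
  have h1: "mpow r m *v (q - mu *\<^sub>R p) = (beta ^ m) *\<^sub>R (q - mu *\<^sub>R p)" by (rule mpow_eigen[OF b])
  have h2: "mpow r m *v (q - mu *\<^sub>R p) = (2 * c - mu) *\<^sub>R (q - mu *\<^sub>R p)" unfolding rm by (rule g_n[OF mu])
  have "(beta ^ m) *\<^sub>R (q - mu *\<^sub>R p) = (2 * c - mu) *\<^sub>R (q - mu *\<^sub>R p)"
    using h1 h2 by (rule trans[OF sym])
  then have "(beta ^ m - (2 * c - mu)) *\<^sub>R (q - mu *\<^sub>R p) = 0" by (simp only: scaleR_left_diff_distrib diff_self)
  then have "beta ^ m - (2 * c - mu) = 0 \<or> q - mu *\<^sub>R p = 0" by (simp only: scaleR_eq_0_iff)
  then have "beta ^ m - (2 * c - mu) = 0" using n_nz[of mu] by blast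
  then have "beta ^ m = 2 * c - mu" by simp
  then have "\<bar>beta\<bar> \<le> max 1 \<bar>2 * c - mu\<bar>" using pow_abs_bound[OF m] by blast
  then have bb: "\<bar>beta\<bar> \<le> max 1 (2 * c - mu)" using nupos by simp
  show ?thesis by (rule that[OF b bb])
qed

definition Bd where "Bd = 2 * p$0 * ((max 1 mu1 * (q$0 + mu2 * p$0) + max 1 mu2 * (q$0 + mu1 * p$0)) / (2 * s))"

lemma root_bound:
  assumes r: "r \<in> G" and rm: "mpow r m = g" and m: "m \<ge> 1"
  shows "r$0$0 \<le> Bd"
proof -
  have rI: "r \<in> Isom_plus" using subgroup_isom[OF G r] .
  have rg: "r *v (g *v x) = g *v (r *v x)" for x
  proof -
    have "r *v (g *v x) = (r ** mpow r m) *v x" using rm by (simp add: matrix_vector_mul_assoc)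
    also have "\<dots> = (mpow r m ** r) *v x" by (simp add: mpow_comm)
    also have "\<dots> = g *v (r *v x)" using rm by (simp add: matrix_vector_mul_assoc)
    finally show ?thesis .
  qed
  have rgi: "r *v (gi *v x) = gi *v (r *v x)" for x
  proof -
    have "g *v (r *v (gi *v x)) = r *v x" using rg[of "gi *v x"] g_gi by simp
    then have "gi *v (g *v (r *v (gi *v x))) = gi *v (r *v x)" by simp
    then show ?thesis using gi_g by simp
  qed
  obtain b1 where b1: "r *v (q - mu1 *\<^sub>R p) = b1 *\<^sub>R (q - mu1 *\<^sub>R p)" "\<bar>b1\<bar> \<le> max 1 mu2"
    using root_beta[OF rg rgi mu1_eq _ rm m] nu1 mu2_pos by auto
  obtain b2 where b2: "r *v (q - mu2 *\<^sub>R p) = b2 *\<^sub>R (q - mu2 *\<^sub>R p)" "\<bar>b2\<bar> \<le> max 1 mu1"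
    using root_beta[OF rg rgi mu2_eq _ rm m] nu2 mu1_pos by auto
  define n1 where "n1 = q - mu1 *\<^sub>R p"
  define n2 where "n2 = q - mu2 *\<^sub>R p"
  have "n2 - n1 = (mu1 - mu2) *\<^sub>R p" by (simp add: n1_def n2_def algebra_simps)
  also have "mu1 - mu2 = 2 * s" by (simp add: mu1_def mu2_def)
  finally have pe: "p = (1 / (2 * s)) *\<^sub>R (n2 - n1)" using s_pos by simp
  have "r *v p = r *v ((1 / (2 * s)) *\<^sub>R (n2 - n1))" using pe by simp
  also have "\<dots> = (1 / (2 * s)) *\<^sub>R (r *v n2 - r *v n1)"
    by (simp add: matrix_vector_mult_scaleR matrix_vector_mult_diff_distrib)
  also have "\<dots> = (1 / (2 * s)) *\<^sub>R (b2 *\<^sub>R n2 - b1 *\<^sub>R n1)"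
    using b1(1) b2(1) by (simp only: n1_def[symmetric] n2_def[symmetric])
  finally have rp: "r *v p = (1 / (2 * s)) *\<^sub>R (b2 *\<^sub>R n2 - b1 *\<^sub>R n1)" .
  have p0: "p$0 > 0" using H3_pos[OF p] .
  have q0: "q$0 > 0" using H3_pos[OF qH] .
  have m1: "mu1 * p$0 > 0" using mu1_pos p0 by simp
  have m2: "mu2 * p$0 > 0" using mu2_pos p0 by simp
  have e1: "n1$0 = q$0 - mu1 * p$0" by (simp add: n1_def)
  have e2: "n2$0 = q$0 - mu2 * p$0" by (simp add: n2_def)
  have an1: "\<bar>n1$0\<bar> \<le> q$0 + mu1 * p$0" unfolding e1 abs_le_iff using m1 q0 by linarith
  have an2: "\<bar>n2$0\<bar> \<le> q$0 + mu2 * p$0" unfolding e2 abs_le_iff using m2 q0 by linarith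
  have "b2 * n2$0 - b1 * n1$0 \<le> \<bar>b2\<bar> * \<bar>n2$0\<bar> + \<bar>b1\<bar> * \<bar>n1$0\<bar>"
    by (simp add: abs_mult[symmetric])
  also have "\<dots> \<le> max 1 mu1 * (q$0 + mu2 * p$0) + max 1 mu2 * (q$0 + mu1 * p$0)"
    using b1(2) b2(2) an1 an2 by (intro add_mono mult_mono) auto
  finally have num: "b2 * n2$0 - b1 * n1$0 \<le> max 1 mu1 * (q$0 + mu2 * p$0) + max 1 mu2 * (q$0 + mu1 * p$0)" .
  have "(r *v p)$0 = (b2 * n2$0 - b1 * n1$0) / (2 * s)" using rp by simp
  also have "\<dots> \<le> (max 1 mu1 * (q$0 + mu2 * p$0) + max 1 mu2 * (q$0 + mu1 * p$0)) / (2 * s)"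
    using num s_pos by (intro divide_right_mono) auto
  finally have rp0: "(r *v p)$0 \<le> (max 1 mu1 * (q$0 + mu2 * p$0) + max 1 mu2 * (q$0 + mu1 * p$0)) / (2 * s)" .
  have "r$0$0 \<le> 2 * p$0 * (r *v p)$0" by (rule A00_bound[OF rI p])
  also have "\<dots> \<le> Bd" unfolding Bd_def using rp0 p0 by (intro mult_left_mono) auto
  finally show ?thesis .
qed

end



lemma roots_finite:
  assumes G: "is_subgroup G" and D: "discrete_group G" and CC: "cocompact G" and T: "torsion_free G"
    and g: "g \<in> G" and g1: "g \<noteq> mat 1"
  shows "finite {r \<in> G. \<exists>m\<ge>1. mpow r m = g}"
proof -
  obtain p where p: "p \<in> H3" and mn: "\<And>x. x \<in> H3 \<Longrightarrow> - mink p (g *v p) \<le> - mink x (g *v x)"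
    using min_disp[OF G D CC g] by blast
  have gI: "g \<in> Isom_plus" using subgroup_isom[OF G g] .
  define c where "c = - mink p (g *v p)"
  have gp: "g *v p \<in> H3" using isom_H3[OF gI p] .
  have c_ge: "c \<ge> 1" using mink_ge1[OF p gp] by (simp add: c_def)
  have "c \<noteq> 1"
  proof
    assume "c = 1"
    then have "mink p (g *v p) = -1" by (simp add: c_def)
    then have "p = g *v p" using H3_eq[OF p gp] by simp
    then have "g = mat 1" using fix_trivial[OF G D T g p] by simp
    then show False using g1 by simp
  qed
  then have c1: "c > 1" using c_ge by simp
  have E: "g *v p + matrix_inv g *v p = (2 * c) *\<^sub>R p" using lagrange[OF G g p mn] by (simp add: c_def)
  interpret eig G g p c using G g p c1 E by (unfold_locales) (simp_all add: c_def)
  show ?thesis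
  proof (rule finite_bounded_subgroup[OF G D, where M = Bd])
    show "{r \<in> G. \<exists>m\<ge>1. mpow r m = g} \<subseteq> G" by auto
    fix r assume "r \<in> {r \<in> G. \<exists>m\<ge>1. mpow r m = g}"
    then obtain m where r: "r \<in> G" "m \<ge> 1" "mpow r m = g" by auto
    show "r$0$0 \<le> Bd" using root_bound[OF r(1) r(3) r(2)] .
  qed
qed

definition Mset where "Mset G d = {C. maximal_cyclic_subgroup G C \<and> d \<in> C}"

lemma M_finite:
  assumes G: "is_subgroup G" and D: "discrete_group G" and CC: "cocompact G" and T: "torsion_free G"
    and g: "g \<in> G" and g1: "g \<noteq> mat 1"
  shows "finite (Mset G g)"
proof -
  define Rt where "Rt = {r \<in> G. \<exists>m\<ge>1. mpow r m = g}"
  have fR: "finite Rt" using roots_finite[OF G D CC T g g1] by (simp add: Rt_def)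
  have "Mset G g \<subseteq> cyc ` (Rt \<union> matrix_inv ` Rt)"
  proof
    fix C assume "C \<in> Mset G g"
    then have C: "maximal_cyclic_subgroup G C" "g \<in> C" by (auto simp: Mset_def)
    then obtain r where r: "r \<in> G" "C = cyc r" by (auto simp: maximal_cyclic_subgroup_def cyclic_subgroup_of_def)
    then obtain j where j: "g = zpow r j" using C(2) by (auto simp: cyc_def)
    show "C \<in> cyc ` (Rt \<union> matrix_inv ` Rt)"
    proof (cases "j \<ge> 0")
      case True
      then have e: "mpow r (nat j) = g" using j by (simp add: zpow_def)
      have "nat j \<noteq> 0" using e g1 by (metis mpow_0)
      then have "nat j \<ge> 1" by simp
      then have "r \<in> Rt" using e r(1) unfolding Rt_def by blast
      then show ?thesis using r(2) by blast
    next
      case False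
      then have e: "mpow (matrix_inv r) (nat (- j)) = g" using j by (simp add: zpow_def)
      have "nat (- j) \<noteq> 0" using e g1 by (metis mpow_0)
      then have "nat (- j) \<ge> 1" by simp
      then have "matrix_inv r \<in> Rt" using e subgroup_inv[OF G r(1)] unfolding Rt_def by blast
      then have "matrix_inv (matrix_inv r) \<in> matrix_inv ` Rt" by blast
      then have "r \<in> matrix_inv ` Rt" using inv_inv[OF G r(1)] by simp
      then show ?thesis using r(2) by blast
    qed
  qed
  then show ?thesis using fR by (meson finite_Un finite_imageI finite_subset)
qed

lemma max_sub: "is_subgroup G \<Longrightarrow> maximal_cyclic_subgroup G C \<Longrightarrow> C \<subseteq> G"
  using cyclic_sub by (auto simp: maximal_cyclic_subgroup_def)

theorem proposition2p12:
  fixes \<Gamma> :: "(real^4^4) set" and lam :: real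
  assumes "is_subgroup \<Gamma>" and "discrete_group \<Gamma>" and "cocompact \<Gamma>" and "torsion_free \<Gamma>"
    and "lam > 0"
    and "(\<Union>C\<in>short_cyclics \<Gamma> lam. Zcyc lam C) = H3"
  shows "finite_dimensional (nerve (Zcyc lam) (short_cyclics \<Gamma> lam))"
proof -
  note G = assms(1) and D = assms(2) and CC = assms(3) and T = assms(4) and l = assms(5)
  obtain K where K: "compact K" "K \<subseteq> H3" "(\<Union>h\<in>\<Gamma>. act h ` K) = H3" using CC by (auto simp: cocompact_def)
  define Fs where "Fs = {d \<in> \<Gamma>. \<exists>k\<in>K. - mink k (d *v k) \<le> cosh lam}"
  have fF: "finite Fs" unfolding Fs_def by (rule finite_disp[OF G D K(1,2)])
  define U where "U = (\<Union>d\<in>Fs - {mat 1}. Mset \<Gamma> d)"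
  have fU: "finite U" unfolding U_def
    using M_finite[OF G D CC T] fF by (auto simp: Fs_def)
  have "card S \<le> card U" if S: "S \<in> nerve (Zcyc lam) (short_cyclics \<Gamma> lam)" for S
  proof -
    have Ss: "S \<subseteq> short_cyclics \<Gamma> lam" "finite S" "S \<noteq> {}" "(\<Inter>C\<in>S. Zcyc lam C) \<noteq> {}"
      using S by (auto simp: nerve_def)
    obtain x where x: "\<And>C. C \<in> S \<Longrightarrow> x \<in> Zcyc lam C" using Ss(4) by blast
    obtain C0 where "C0 \<in> S" using Ss(3) by blast
    then have xH: "x \<in> H3" using x[of C0] by (auto simp: Zcyc_def Zel_def)
    have "x \<in> (\<Union>h\<in>\<Gamma>. act h ` K)" using K(3) xH by simp
    then obtain h k where hk: "h \<in> \<Gamma>" "k \<in> K" "x = h *v k" by (auto simp: act_def)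
    have "conjm h ` C \<in> U" if C: "C \<in> S" for C
    proof -
      have Cm: "maximal_cyclic_subgroup \<Gamma> C" using Ss(1) C by (auto simp: short_cyclics_def)
      have CG: "C \<subseteq> \<Gamma>" using max_sub[OF G Cm] .
      obtain gm where gm: "gm \<in> C" "gm \<noteq> mat 1" "x \<in> Zel lam gm" using x[OF C] by (auto simp: Zcyc_def)
      have gmG: "gm \<in> \<Gamma>" using gm CG by auto
      have hd: "hdist x (gm *v x) < lam" using gm(3) by (simp add: Zel_def act_def)
      have gx: "gm *v x \<in> H3" using isom_H3[OF subgroup_isom[OF G gmG] xH] .
      have lt: "- mink x (gm *v x) < cosh lam" using hdist_lt[OF xH gx l hd] .
      define d where "d = conjm h gm"
      have dG: "d \<in> \<Gamma>" using conjm_G[OF G hk(1) gmG] by (simp add: d_def)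
      have "- mink k (d *v k) = - mink x (gm *v x)" using conj_disp[OF G hk(1) gmG, of k] hk(3) by (simp add: d_def)
      then have "- mink k (d *v k) \<le> cosh lam" using lt by linarith
      then have dF: "d \<in> Fs" using dG hk(2) unfolding Fs_def by blast
      have d1: "d \<noteq> mat 1"
      proof
        assume "d = mat 1"
        then have "conjm (matrix_inv h) d = mat 1" using conjm_one[OF G subgroup_inv[OF G hk(1)]] by simp
        then show False using conjm_back[OF G hk(1), of gm] gm(2) by (simp add: d_def)
      qed
      have "conjm h ` C \<in> Mset \<Gamma> d"
        using conjm_maximal[OF G hk(1) Cm] gm(1) by (auto simp: Mset_def d_def)
      then show ?thesis using dF d1 by (auto simp: U_def)
    qed
    then have sub: "(image (conjm h)) ` S \<subseteq> U" by auto
    have inj: "inj_on (image (conjm h)) S"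
      using conjm_inj[OF G hk(1)] by (meson inj_image_eq_iff inj_onI)
    have "card S = card ((image (conjm h)) ` S)" using card_image[OF inj] by simp
    also have "\<dots> \<le> card U" using card_mono[OF fU sub] .
    finally show ?thesis .
  qed
  then show ?thesis unfolding finite_dimensional_def by (intro exI[of _ "card U"]) fastforce
qed

end
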